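(* Let $\kappa>0$ be sufficiently small and define $F_1:\mathbb{R}\to\mathbb{R}$ by $F_1(0)=0$, $F_1(s)=-\frac12 s^2\log s^2$ for $0<|s|<\kappa$, and $F_1(s)=-\frac12 s^2(\log\kappa^2+3)+2\kappa|s|-\frac{\kappa^2}{2}$ for $|s|\ge\kappa$. Then $F_1$ is an N-function, and both $F_1$ and its conjugate function $\tilde F_1$ satisfy the $\Delta_2$-condition.
   Context: A continuous $\Phi:\mathbb{R}\to[0,\infty)$ is an N-function if it is convex, even, $\Phi(t)=0\iff t=0$, $\lim_{t\to0}\Phi(t)/t=0$ and $\lim_{t\to\infty}\Phi(t)/t=+\infty$. $\Phi$ satisfies the $\Delta_2$-condition if there is $k>0$ with $\Phi(2t)\le k\Phi(t)$ for all $t\ge0$. The conjugate is $\tilde\Phi(s)=\max_{t\ge0}\{st-\Phi(t)\}$, $s\ge 0$. *)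

theory Defs
  imports "HOL-Analysis.Analysis"
begin

definition N_function :: "(real \<Rightarrow> real) \<Rightarrow> bool" where
  "N_function \<Phi> \<longleftrightarrow>
     continuous_on UNIV \<Phi> \<and>
     (\<forall>t. \<Phi> t \<ge> 0) \<and>
     convex_on UNIV \<Phi> \<and>
     (\<forall>t. \<Phi> (- t) = \<Phi> t) \<and>
     (\<forall>t. \<Phi> t = 0 \<longleftrightarrow> t = 0) \<and>
     ((\<lambda>t. \<Phi> t / t) \<longlongrightarrow> 0) (at 0) \<and>
     filterlim (\<lambda>t. \<Phi> t / t) at_top at_top"

definition Delta2 :: "(real \<Rightarrow> real) \<Rightarrow> bool" where
  "Delta2 \<Phi> \<longleftrightarrow> (\<exists>k>0. \<forall>t\<ge>0. \<Phi> (2 * t) \<le> k * \<Phi> t)"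

text \<open>Conjugate (complementary) function; only its values for s \<ge> 0 are relevant.\<close>
definition conjugate :: "(real \<Rightarrow> real) \<Rightarrow> real \<Rightarrow> real" where
  "conjugate \<Phi> s = (SUP t\<in>{0..}. s * t - \<Phi> t)"

definition F1 :: "real \<Rightarrow> real \<Rightarrow> real" where
  "F1 \<kappa> s =
     (if s = 0 then 0
      else if \<bar>s\<bar> < \<kappa> then - (1/2) * s\<^sup>2 * ln (s\<^sup>2)
      else - (1/2) * s\<^sup>2 * (ln (\<kappa>\<^sup>2) + 3) + 2 * \<kappa> * \<bar>s\<bar> - \<kappa>\<^sup>2 / 2)"

end

theory Submission
  imports Defs "HOL-Real_Asymp.Real_Asymp"
begin

lemma F1_in:
  assumes "0 < t" "t < \<kappa>"
  shows "F1 \<kappa> t = -(t\<^sup>2) * ln t"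
  using assms by (simp add: F1_def ln_realpow)

lemma F1_out:
  assumes "0 < \<kappa>" "\<kappa> \<le> t"
  shows "F1 \<kappa> t = (- ln \<kappa> - 3/2) * t\<^sup>2 + 2 * \<kappa> * t - \<kappa>\<^sup>2 / 2"
  using assms by (simp add: F1_def ln_realpow algebra_simps)

lemma F1_even: "F1 \<kappa> (- s) = F1 \<kappa> s"
  by (simp add: F1_def)

lemma F1_0: "F1 \<kappa> 0 = 0"
  by (simp add: F1_def)

definition dpos :: "real \<Rightarrow> real \<Rightarrow> real" where
  "dpos \<kappa> t = (if t < \<kappa> then -2*t*ln t - t else 2*(- ln \<kappa> - 3/2)*t + 2*\<kappa>)"

definition Fd :: "real \<Rightarrow> real \<Rightarrow> real" where
  "Fd \<kappa> s = sgn s * dpos \<kappa> \<bar>s\<bar>"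

lemma small_ln:
  fixes \<kappa> :: real
  assumes "0 < \<kappa>" "\<kappa> < exp (-6)"
  shows "ln \<kappa> < -6"
proof -
  have "ln \<kappa> < ln (exp (-6))" using assms by (subst ln_less_cancel_iff) auto
  then show ?thesis by simp
qed

lemma glue:
  fixes f :: "real \<Rightarrow> real"
  assumes "(f has_field_derivative D) (at x within {..x})"
    "(f has_field_derivative D) (at x within {x..})"
  shows "(f has_field_derivative D) (at x)"
proof -
  have U: "UNIV = {..x} \<union> {x..}" by auto
  have "((\<lambda>y. (f y - f x) / (y - x)) \<longlongrightarrow> D) (at x within ({..x} \<union> {x..}))"
    using assms unfolding has_field_derivative_iff at_within_union
    by (rule filterlim_sup)
  then show ?thesis unfolding has_field_derivative_iff U[symmetric] .
qed

lemma deriv_inner: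
  assumes "0 < t"
  shows "((\<lambda>t. -(t\<^sup>2) * ln t) has_real_derivative (-2*t*ln t - t)) (at t)"
  using assms by (auto intro!: derivative_eq_intros simp: field_simps power2_eq_square)

lemma deriv_outer:
  shows "((\<lambda>t. (- ln \<kappa> - 3/2) * t\<^sup>2 + 2 * \<kappa> * t - \<kappa>\<^sup>2 / 2) has_real_derivative
     (2*(- ln \<kappa> - 3/2)*t + 2*\<kappa>)) (at t)"
  by (auto intro!: derivative_eq_intros simp: field_simps power2_eq_square)

lemma deriv_pos:
  assumes k: "0 < \<kappa>" and t: "0 < t"
  shows "(F1 \<kappa> has_real_derivative dpos \<kappa> t) (at t)"
proof -
  consider "t < \<kappa>" | "t = \<kappa>" | "t > \<kappa>" by linarith
  then show ?thesis
  proof cases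
    case 1
    show ?thesis
      using has_field_derivative_transform_within_open[OF deriv_inner[OF t], of "{0<..<\<kappa>}" "F1 \<kappa>"]
        1 t by (auto simp: F1_in dpos_def)
  next
    case 3
    show ?thesis
      using has_field_derivative_transform_within_open[OF deriv_outer[of \<kappa> t], of "{\<kappa><..}" "F1 \<kappa>"]
        3 k by (auto simp: F1_out dpos_def)
  next
    case 2
    have eqv: "-2*\<kappa>*ln \<kappa> - \<kappa> = 2*(- ln \<kappa> - 3/2)*\<kappa> + 2*\<kappa>" by (simp add: algebra_simps)
    have L: "(F1 \<kappa> has_real_derivative dpos \<kappa> t) (at t within {..t})"
    proof (rule has_field_derivative_transform_within[where d = \<kappa>])
      show "((\<lambda>t. -(t\<^sup>2) * ln t) has_real_derivative dpos \<kappa> t) (at t within {..t})"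
      proof -
        have "dpos \<kappa> t = -2*t*ln t - t" using 2 eqv by (simp add: dpos_def)
        then show ?thesis using has_field_derivative_at_within[OF deriv_inner[OF t]] by simp
      qed
      show "0 < \<kappa>" by fact
      show "t \<in> {..t}" by simp
      fix x assume "x \<in> {..t}" "dist x t < \<kappa>"
      then have "0 < x" "x \<le> \<kappa>" using 2 by (auto simp: dist_real_def)
      then show "-(x\<^sup>2) * ln x = F1 \<kappa> x"
        using F1_in[of x \<kappa>] F1_out[OF k, of \<kappa>] by (cases "x = \<kappa>") (auto simp: ln_realpow algebra_simps power2_eq_square)
    qed
    have R: "(F1 \<kappa> has_real_derivative dpos \<kappa> t) (at t within {t..})"
    proof (rule has_field_derivative_transform_within[where d = 1])
      show "((\<lambda>t. (- ln \<kappa> - 3/2) * t\<^sup>2 + 2 * \<kappa> * t - \<kappa>\<^sup>2 / 2) has_real_derivative dpos \<kappa> t) (at t within {t..})"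
        using deriv_outer[of \<kappa> t] 2 by (auto simp: dpos_def intro: has_field_derivative_at_within)
      show "(0::real) < 1" by simp
      show "t \<in> {t..}" by simp
      fix x assume "x \<in> {t..}" "dist x t < 1"
      then show "(- ln \<kappa> - 3/2) * x\<^sup>2 + 2 * \<kappa> * x - \<kappa>\<^sup>2 / 2 = F1 \<kappa> x"
        using F1_out[OF k, of x] 2 by auto
    qed
    show ?thesis by (rule glue[OF L R])
  qed
qed

lemma deriv_zero:
  assumes k: "0 < \<kappa>"
  shows "(F1 \<kappa> has_real_derivative 0) (at 0)"
proof -
  have lim: "((\<lambda>h::real. -(1/2)*h*ln(h^2)) \<longlongrightarrow> 0) (at 0)"
    by real_asymp
  have ev: "eventually (\<lambda>h. -(1/2)*h*ln(h^2) = (F1 \<kappa> (0 + h) - F1 \<kappa> 0) / h) (at 0)"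
  proof -
    have "eventually (\<lambda>h::real. h \<in> ball 0 \<kappa> - {0}) (at 0)"
      using k by (intro eventually_at_in_open) auto
    then show ?thesis
      by eventually_elim (auto simp: F1_def dist_real_def power2_eq_square)
  qed
  show ?thesis unfolding DERIV_def
    using Lim_transform_eventually[OF lim ev] .
qed

lemma deriv_all:
  assumes k: "0 < \<kappa>"
  shows "(F1 \<kappa> has_real_derivative Fd \<kappa> s) (at s)"
proof -
  consider "s = 0" | "s > 0" | "s < 0" by linarith
  then show ?thesis
  proof cases
    case 1 then show ?thesis using deriv_zero[OF k] by (simp add: Fd_def)
  next
    case 2 then show ?thesis using deriv_pos[OF k 2] by (simp add: Fd_def)
  next
    case 3
    have d: "(F1 \<kappa> has_real_derivative dpos \<kappa> (-s)) (at (- s))" using deriv_pos[OF k] 3 by simp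
    have "((\<lambda>x. F1 \<kappa> (- x)) has_real_derivative dpos \<kappa> (-s) * (-1)) (at s)"
      by (rule DERIV_chain2[where g = "\<lambda>x. - x", OF d]) (auto intro!: derivative_eq_intros)
    moreover have "(\<lambda>x. F1 \<kappa> (- x)) = F1 \<kappa>" by (rule ext) (simp add: F1_even)
    ultimately show ?thesis using 3 by (simp add: Fd_def)
  qed
qed


lemma inner_mono:
  fixes \<kappa> :: real
  assumes x: "0 < x" and xy: "x \<le> y" and yk: "y \<le> \<kappa>" and L: "ln \<kappa> < -6"
  shows "-2*x*ln x - x \<le> -2*y*ln y - y"
proof -
  have y: "0 < y" using x xy by linarith
  have "ln (y/x) \<le> y/x - 1" using x y by (intro ln_le_minus_one) auto
  then have "ln y - ln x \<le> y/x - 1" using x y by (simp add: ln_div)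
  then have "x * (ln y - ln x) \<le> x * (y/x - 1)" using x by (intro mult_left_mono) auto
  then have A: "x*ln y - x*ln x \<le> y - x" using x by (simp add: algebra_simps)
  have "ln y \<le> ln \<kappa>" using y yk by simp
  then have "(y-x)*(2*ln y+3) \<le> 0" using xy L by (intro mult_nonneg_nonpos) auto
  then have B: "2*y*ln y + 3*y - 2*x*ln y - 3*x \<le> 0" by (simp add: algebra_simps)
  show ?thesis using A B by linarith
qed

lemma dpos_nonneg:
  fixes \<kappa> :: real
  assumes k: "0 < \<kappa>" and L: "ln \<kappa> < -6" and t: "0 \<le> t"
  shows "0 \<le> dpos \<kappa> t"
proof (cases "t < \<kappa>")
  case True
  show ?thesis
  proof (cases "t = 0")
    case False
    then have "0 < t" using t by simp
    then have "ln t < ln \<kappa>" using True by simp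
    then have "0 \<le> t * (-2*ln t - 1)" using t L by (intro mult_nonneg_nonneg) auto
    then show ?thesis using True by (simp add: dpos_def algebra_simps)
  qed (use k in \<open>simp add: dpos_def\<close>)
next
  case False
  then show ?thesis using k L t by (simp add: dpos_def)
qed

lemma dpos_mono:
  fixes \<kappa> :: real
  assumes k: "0 < \<kappa>" and L: "ln \<kappa> < -6" and x: "0 \<le> x" and xy: "x \<le> y"
  shows "dpos \<kappa> x \<le> dpos \<kappa> y"
proof -
  have out: "(2*(- ln \<kappa> - 3/2)*p) + 2*\<kappa> \<le> (2*(- ln \<kappa> - 3/2)*q) + 2*\<kappa>" if "p \<le> q" for p q :: real
    using that L by (intro add_right_mono mult_left_mono) auto
  have atk: "-2*\<kappa>*ln \<kappa> - \<kappa> = 2*(- ln \<kappa> - 3/2)*\<kappa> + 2*\<kappa>" by (simp add: algebra_simps)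
  show ?thesis
  proof (cases "x = 0")
    case True
    have "dpos \<kappa> 0 = 0" using k by (simp add: dpos_def)
    then show ?thesis using dpos_nonneg[OF k L, of y] xy True by simp
  next
    case False
    then have x0: "0 < x" using x by simp
    consider "y < \<kappa>" | "x < \<kappa>" "\<kappa> \<le> y" | "\<kappa> \<le> x" by linarith
    then show ?thesis
    proof cases
      case 1
      then show ?thesis using inner_mono[OF x0 xy _ L] xy by (simp add: dpos_def)
    next
      case 2
      have "-2*x*ln x - x \<le> -2*\<kappa>*ln \<kappa> - \<kappa>" using inner_mono[OF x0 _ _ L] 2 by simp
      also have "\<dots> \<le> 2*(- ln \<kappa> - 3/2)*y + 2*\<kappa>" unfolding atk using out 2 by simp
      finally show ?thesis using 2 by (simp add: dpos_def)
    next
      case 3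
      then show ?thesis using out[OF xy] xy by (simp add: dpos_def)
    qed
  qed
qed

lemma Fd_mono:
  fixes \<kappa> :: real
  assumes k: "0 < \<kappa>" and L: "ln \<kappa> < -6" and xy: "x \<le> y"
  shows "Fd \<kappa> x \<le> Fd \<kappa> y"
proof -
  consider "0 \<le> x" | "y \<le> 0" | "x < 0" "0 < y" by linarith
  then show ?thesis
  proof cases
    case 1
    then show ?thesis using dpos_mono[OF k L 1 xy] xy dpos_nonneg[OF k L]
      by (cases "x = 0") (auto simp: Fd_def)
  next
    case 2
    then have "dpos \<kappa> (-y) \<le> dpos \<kappa> (-x)" using dpos_mono[OF k L, of "-y" "-x"] xy by simp
    have n: "0 \<le> dpos \<kappa> (-x)" using dpos_nonneg[OF k L, of "-x"] 2 xy by simp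
    show ?thesis
    proof (cases "y = 0")
      case True
      have "sgn x * dpos \<kappa> (-x) \<le> 0" using n 2 True xy
        by (intro mult_nonpos_nonneg) auto
      then show ?thesis using True xy by (simp add: Fd_def)
    next
      case False
      then show ?thesis using 2 xy \<open>dpos \<kappa> (-y) \<le> dpos \<kappa> (-x)\<close>
        by (cases "x = y") (auto simp: Fd_def)
    qed
  next
    case 3
    then show ?thesis using dpos_nonneg[OF k L, of "-x"] dpos_nonneg[OF k L, of y]
      by (auto simp: Fd_def)
  qed
qed

lemma F1_pos_aux:
  fixes \<kappa> :: real
  assumes k: "0 < \<kappa>" and L: "ln \<kappa> < -6" and t: "0 < t"
  shows "0 < F1 \<kappa> t"
proof (cases "t < \<kappa>")
  case True
  then have "ln t < ln \<kappa>" using t by simp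
  then have "ln t < 0" using L by simp
  then have "0 < t\<^sup>2 * (- ln t)" using t by (intro mult_pos_pos) auto
  then show ?thesis using F1_in[OF t True] by simp
next
  case False
  then have "\<kappa> \<le> t" by simp
  have a: "0 \<le> (- ln \<kappa> - 3/2) * t\<^sup>2" using L by simp
  have "\<kappa> * \<kappa> \<le> \<kappa> * t" using k \<open>\<kappa> \<le> t\<close> by simp
  then have "0 < 2 * \<kappa> * t - \<kappa>\<^sup>2 / 2" using k by (simp add: power2_eq_square)
  then show ?thesis using F1_out[OF k \<open>\<kappa> \<le> t\<close>] a by linarith
qed

lemma F1_abs: "F1 \<kappa> t = F1 \<kappa> \<bar>t\<bar>"
  by (cases "t \<ge> 0") (auto simp: F1_even)

lemma F1_pos:
  fixes \<kappa> :: real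
  assumes k: "0 < \<kappa>" and L: "ln \<kappa> < -6" and t: "t \<noteq> 0"
  shows "0 < F1 \<kappa> t"
  using F1_pos_aux[OF k L, of "\<bar>t\<bar>"] t F1_abs[of \<kappa> t] by simp

lemma lim0:
  fixes \<kappa> :: real
  assumes k: "0 < \<kappa>"
  shows "((\<lambda>t. F1 \<kappa> t / t) \<longlongrightarrow> 0) (at 0)"
  using deriv_zero[OF k] unfolding DERIV_def by (simp add: F1_0)

lemma lim_top:
  fixes \<kappa> :: real
  assumes k: "0 < \<kappa>" and L: "ln \<kappa> < -6"
  shows "filterlim (\<lambda>t. F1 \<kappa> t / t) at_top at_top"
proof (rule filterlim_at_top_mono)
  have a: "0 < - ln \<kappa> - 3/2" using L by simp
  show "filterlim (\<lambda>t. (- ln \<kappa> - 3/2) * t) at_top at_top"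
    by (rule filterlim_tendsto_pos_mult_at_top[OF tendsto_const a filterlim_ident])
  show "eventually (\<lambda>t. (- ln \<kappa> - 3/2) * t \<le> F1 \<kappa> t / t) at_top"
    using eventually_ge_at_top[of \<kappa>]
  proof eventually_elim
    case (elim t)
    then have t: "0 < t" using k by simp
    have "\<kappa> * \<kappa> \<le> \<kappa> * t" using k elim by simp
    then have "0 \<le> 2 * \<kappa> * t - \<kappa>\<^sup>2 / 2" using k by (simp add: power2_eq_square)
    then have "(- ln \<kappa> - 3/2) * t * t \<le> F1 \<kappa> t"
      using F1_out[OF k elim] by (simp add: power2_eq_square)
    then show ?case using t by (simp add: pos_le_divide_eq)
  qed
qed

lemma Nfun:
  fixes \<kappa> :: real
  assumes k: "0 < \<kappa>" and L: "ln \<kappa> < -6"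
  shows "N_function (F1 \<kappa>)"
  unfolding N_function_def
proof (intro conjI allI)
  show "continuous_on UNIV (F1 \<kappa>)"
    by (intro continuous_at_imp_continuous_on ballI DERIV_isCont[OF deriv_all[OF k]])
  fix t show "0 \<le> F1 \<kappa> t" using F1_pos[OF k L, of t] by (cases "t = 0") (auto simp: F1_0)
next
  show "convex_on UNIV (F1 \<kappa>)"
    by (rule convex_on_realI[where f' = "Fd \<kappa>"]) (auto intro: deriv_all[OF k] Fd_mono[OF k L])
next
  fix t show "F1 \<kappa> (- t) = F1 \<kappa> t" by (rule F1_even)
next
  fix t show "F1 \<kappa> t = 0 \<longleftrightarrow> t = 0" using F1_pos[OF k L, of t] by (metis F1_0 less_irrefl)
next
  show "((\<lambda>t. F1 \<kappa> t / t) \<longlongrightarrow> 0) (at 0)" by (rule lim0[OF k])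
  show "filterlim (\<lambda>t. F1 \<kappa> t / t) at_top at_top" by (rule lim_top[OF k L])
qed


lemma D2_F1:
  fixes \<kappa> :: real
  assumes k: "0 < \<kappa>" and L: "ln \<kappa> < -6" and t: "0 \<le> t"
  shows "F1 \<kappa> (2 * t) \<le> 4 * F1 \<kappa> t"
proof -
  consider "t = 0" | "0 < t" "2*t < \<kappa>" | "\<kappa> \<le> t" | "0 < t" "t < \<kappa>" "\<kappa> \<le> 2*t" using t by linarith
  then show ?thesis
  proof cases
    case 1 then show ?thesis by (simp add: F1_0)
  next
    case 2
    have "F1 \<kappa> (2*t) = -((2*t)\<^sup>2) * ln (2*t)" using 2 by (intro F1_in) auto
    also have "\<dots> = -4*t\<^sup>2 * ln 2 - 4*t\<^sup>2 * ln t" using 2 by (simp add: ln_mult power2_eq_square algebra_simps)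
    also have "\<dots> \<le> - 4*t\<^sup>2 * ln t" by simp
    also have "\<dots> = 4 * F1 \<kappa> t" using F1_in[of t \<kappa>] 2 by simp
    finally show ?thesis .
  next
    case 3
    have h: "\<kappa> * \<kappa> \<le> \<kappa> * t" using k 3 by simp
    have k2: "\<kappa> \<le> 2*t" using 3 k by simp
    have e1: "F1 \<kappa> (2*t) = -4*(t\<^sup>2*ln \<kappa>) - 6*t\<^sup>2 + 4*(\<kappa>*t) - \<kappa>*\<kappa>/2"
      using F1_out[OF k k2] by (simp add: power2_eq_square algebra_simps)
    have e2: "F1 \<kappa> t = -(t\<^sup>2*ln \<kappa>) - 3/2*t\<^sup>2 + 2*(\<kappa>*t) - \<kappa>*\<kappa>/2"
      using F1_out[OF k 3] by (simp add: power2_eq_square algebra_simps)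
    have "0 \<le> \<kappa> * t" using k 3 by simp
    then show ?thesis unfolding e1 e2 using h by (simp add: algebra_simps)
  next
    case 4
    have "ln t \<le> ln \<kappa>" using 4 by simp
    then have "t\<^sup>2 * (- ln \<kappa>) \<le> t\<^sup>2 * (- ln t)" by (intro mult_left_mono) auto
    moreover have "0 \<le> (t - \<kappa>/2) * (6*t - \<kappa>)" using 4 k by (intro mult_nonneg_nonneg) auto
    moreover have "F1 \<kappa> (2*t) = (- ln \<kappa> - 3/2) * (2*t)\<^sup>2 + 2 * \<kappa> * (2*t) - \<kappa>\<^sup>2 / 2"
      using F1_out[OF k 4(3)] .
    moreover have "F1 \<kappa> t = -(t\<^sup>2) * ln t" using F1_in 4 by simp
    ultimately show ?thesis by (simp add: power2_eq_square algebra_simps)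
  qed
qed

lemma N2_F1:
  fixes \<kappa> :: real
  assumes k: "0 < \<kappa>" and L: "ln \<kappa> < -6" and t: "0 \<le> t"
  shows "8 * F1 \<kappa> t \<le> F1 \<kappa> (4 * t)"
proof -
  have l4: "ln (4::real) \<le> 3" using ln_le_minus_one[of 4] by simp
  have l4p: "0 < ln (4::real)" by simp
  consider "t = 0" | "0 < t" "4*t < \<kappa>" | "\<kappa> \<le> t" | "0 < t" "t < \<kappa>" "\<kappa> \<le> 4*t" using t by linarith
  then show ?thesis
  proof cases
    case 1 then show ?thesis by (simp add: F1_0)
  next
    case 2
    have "ln t < ln \<kappa>" using 2 by simp
    then have "0 \<le> t\<^sup>2 * (- ln t - 2 * ln 4)" using L l4 by (intro mult_nonneg_nonneg) auto
    moreover have "F1 \<kappa> (4*t) = -((4*t)\<^sup>2) * ln (4*t)" using 2 by (intro F1_in) auto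
    moreover have "ln (4*t) = ln 4 + ln t" using 2 by (simp add: ln_mult)
    moreover have "F1 \<kappa> t = -(t\<^sup>2) * ln t" using F1_in 2 by simp
    ultimately show ?thesis by (simp add: power2_eq_square algebra_simps)
  next
    case 3
    have a: "9/2 \<le> - ln \<kappa> - 3/2" using L by simp
    have "(9/2) * (t*t) \<le> (- ln \<kappa> - 3/2) * (t*t)" using a by (intro mult_right_mono) auto
    moreover have "0 \<le> (6*t - 2*\<kappa>/3)\<^sup>2 + (7/2 - 4/9) * \<kappa>\<^sup>2" by simp
    ultimately have "0 \<le> 8 * (- ln \<kappa> - 3/2) * (t*t) - 8*\<kappa>*t + 7/2*\<kappa>\<^sup>2"
      by (simp add: power2_eq_square algebra_simps)
    then show ?thesis using F1_out[OF k 3] F1_out[OF k, of "4*t"] 3 k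
      by (simp add: power2_eq_square algebra_simps)
  next
    case 4
    have "ln (\<kappa>/4) \<le> ln t" using 4 k by simp
    then have "- ln t \<le> - ln \<kappa> + ln 4" using k by (simp add: ln_div)
    then have "t\<^sup>2 * (- ln t) \<le> t\<^sup>2 * (- ln \<kappa> + ln 4)" by (intro mult_left_mono) auto
    then have h1: "-(t\<^sup>2*ln t) \<le> -(t\<^sup>2*ln \<kappa>) + t\<^sup>2*ln 4" by (simp add: algebra_simps)
    have h2: "t\<^sup>2*ln 4 \<le> t\<^sup>2 * 3" using l4 by (intro mult_left_mono) auto
    have h3: "t\<^sup>2*ln \<kappa> \<le> t\<^sup>2 * (-6)" using L by (intro mult_left_mono) auto
    have h4: "\<kappa> * \<kappa> \<le> 4*(\<kappa> * t)" using k 4 by simp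
    have h5: "0 \<le> \<kappa> * t" using k 4 by simp
    have e1: "F1 \<kappa> (4*t) = -16*(t\<^sup>2*ln \<kappa>) - 24*t\<^sup>2 + 8*(\<kappa>*t) - \<kappa>*\<kappa>/2"
      using F1_out[OF k 4(3)] by (simp add: power2_eq_square algebra_simps)
    have e2: "F1 \<kappa> t = -(t\<^sup>2*ln t)" using F1_in 4 by simp
    show ?thesis unfolding e1 e2 using h1 h2 h3 h4 h5 by linarith
  qed
qed

lemma conj_bdd:
  fixes \<kappa> :: real
  assumes k: "0 < \<kappa>" and L: "ln \<kappa> < -6" and s: "0 \<le> s"
  shows "bdd_above ((\<lambda>t. s * t - F1 \<kappa> t) ` {0..})"
proof -
  define a where "a = - ln \<kappa> - 3/2"
  have a: "0 < a" using L by (simp add: a_def)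
  define M where "M = max \<kappa> (s / a)"
  show ?thesis
  proof (rule bdd_aboveI2[where M = "s * M"])
    fix t :: real assume "t \<in> {0..}"
    then have t: "0 \<le> t" by simp
    have nn: "0 \<le> F1 \<kappa> t" using F1_pos[OF k L, of t] by (cases "t = 0") (auto simp: F1_0)
    show "s * t - F1 \<kappa> t \<le> s * M"
    proof (cases "t \<le> M")
      case True
      then have "s * t \<le> s * M" using s by (intro mult_left_mono) auto
      then show ?thesis using nn by linarith
    next
      case False
      then have tk: "\<kappa> \<le> t" and ts: "s / a \<le> t" by (auto simp: M_def)
      then have "s \<le> a * t" using a by (simp add: pos_divide_le_eq mult.commute)
      then have "s * t \<le> a * t * t" using t by (intro mult_right_mono) auto
      moreover have "\<kappa> * \<kappa> \<le> \<kappa> * t" using k tk by simp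
      moreover have "0 \<le> s * M" using s k by (simp add: M_def)
      moreover have "0 \<le> \<kappa> * t" using k t by simp
      ultimately show ?thesis using F1_out[OF k tk] unfolding a_def[symmetric]
        by (simp add: power2_eq_square algebra_simps)
    qed
  qed
qed

lemma D2_conj:
  fixes \<kappa> :: real
  assumes k: "0 < \<kappa>" and L: "ln \<kappa> < -6"
  shows "Delta2 (conjugate (F1 \<kappa>))"
  unfolding Delta2_def
proof (intro exI[of _ 8] conjI allI impI)
  fix s :: real assume s: "0 \<le> s"
  show "conjugate (F1 \<kappa>) (2 * s) \<le> 8 * conjugate (F1 \<kappa>) s"
    unfolding conjugate_def
  proof (rule cSUP_least)
    show "{0::real..} \<noteq> {}" by auto
    fix t :: real assume "t \<in> {0..}"
    then have t: "0 \<le> t" by simp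
    have "2 * s * t - F1 \<kappa> t = 8 * (s * (t/4)) - F1 \<kappa> (4 * (t/4))" by simp
    also have "\<dots> \<le> 8 * (s * (t/4)) - 8 * F1 \<kappa> (t/4)" using N2_F1[OF k L, of "t/4"] t by simp
    also have "\<dots> = 8 * (s * (t/4) - F1 \<kappa> (t/4))" by simp
    also have "\<dots> \<le> 8 * (SUP u\<in>{0..}. s * u - F1 \<kappa> u)"
      using cSUP_upper[where f="\<lambda>u. s*u - F1 \<kappa> u" and A="{0..}" and x="t/4"] conj_bdd[OF k L s] t
      by simp
    finally show "2 * s * t - F1 \<kappa> t \<le> 8 * (SUP u\<in>{0..}. s * u - F1 \<kappa> u)" .
  qed
qed simp

theorem proposition3p1:
  shows "\<exists>\<kappa>\<^sub>0>0. \<forall>\<kappa>. 0 < \<kappa> \<and> \<kappa> < \<kappa>\<^sub>0 \<longrightarrow>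
           N_function (F1 \<kappa>) \<and> Delta2 (F1 \<kappa>) \<and> Delta2 (conjugate (F1 \<kappa>))"
proof (intro exI[of _ "exp (-6)"] conjI allI impI)
  show "(0::real) < exp (-6)" by simp
  fix \<kappa> :: real assume "0 < \<kappa> \<and> \<kappa> < exp (-6)"
  then have k: "0 < \<kappa>" and L: "ln \<kappa> < -6" using small_ln by auto
  show "N_function (F1 \<kappa>)" by (rule Nfun[OF k L])
  show "Delta2 (F1 \<kappa>)" unfolding Delta2_def
    by (intro exI[of _ 4]) (auto intro: D2_F1[OF k L])
  show "Delta2 (conjugate (F1 \<kappa>))" by (rule D2_conj[OF k L])
qed

end
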